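(* For every nice graph $G$ with maximum degree at most $4$, $\chi'_{qm\Sigma}(G)\le 7$.
   Context: All graphs are simple and finite. A $k$-edge-coloring of $G$ is any map $c:E(G)\to\{1,\dots,k\}$ (adjacent edges may share colors). It induces $\sigma_c(v)=\sum_{u\in N(v)}c(vu)$. The coloring is neighbor sum distinguishing (NSD) if $\sigma_c(u)\ne\sigma_c(v)$ for every edge $uv$. It is quasi-majority if every vertex $v$ is incident to at most $\lceil d(v)/2\rceil$ edges of each single color. $\chi'_{qm\Sigma}(G)$ denotes the least $k$ such that $G$ has a $k$-edge-coloring that is both quasi-majority and NSD. A graph is nice if it has no connected component isomorphic to $K_2$. *)

theory Defs
  imports Complex_Main
begin

definition simple_graph :: "'a set \<Rightarrow> 'a set set \<Rightarrow> bool" where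
  "simple_graph V E \<longleftrightarrow> finite V \<and>
     (\<forall>e\<in>E. \<exists>u v. u \<noteq> v \<and> u \<in> V \<and> v \<in> V \<and> e = {u, v})"

definition nbhd :: "'a set \<Rightarrow> 'a set set \<Rightarrow> 'a \<Rightarrow> 'a set" where
  "nbhd V E v = {u \<in> V. {v, u} \<in> E}"

definition degree :: "'a set \<Rightarrow> 'a set set \<Rightarrow> 'a \<Rightarrow> nat" where
  "degree V E v = card (nbhd V E v)"

definition max_degree_le :: "'a set \<Rightarrow> 'a set set \<Rightarrow> nat \<Rightarrow> bool" where
  "max_degree_le V E D \<longleftrightarrow> (\<forall>v\<in>V. degree V E v \<le> D)"

text \<open>Nice: no connected component isomorphic to K2, i.e. no edge both of whose
  endpoints have degree 1.\<close>
definition nice :: "'a set \<Rightarrow> 'a set set \<Rightarrow> bool" where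
  "nice V E \<longleftrightarrow> \<not> (\<exists>u\<in>V. \<exists>v\<in>V. {u, v} \<in> E \<and> degree V E u = 1 \<and> degree V E v = 1)"

definition edge_coloring :: "'a set set \<Rightarrow> nat \<Rightarrow> ('a set \<Rightarrow> nat) \<Rightarrow> bool" where
  "edge_coloring E k c \<longleftrightarrow> (\<forall>e\<in>E. c e \<in> {1..k})"

definition sigma :: "'a set \<Rightarrow> 'a set set \<Rightarrow> ('a set \<Rightarrow> nat) \<Rightarrow> 'a \<Rightarrow> nat" where
  "sigma V E c v = (\<Sum>u\<in>nbhd V E v. c {v, u})"

definition nsd :: "'a set \<Rightarrow> 'a set set \<Rightarrow> ('a set \<Rightarrow> nat) \<Rightarrow> bool" where
  "nsd V E c \<longleftrightarrow> (\<forall>u\<in>V. \<forall>v\<in>V. {u, v} \<in> E \<longrightarrow> sigma V E c u \<noteq> sigma V E c v)"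

definition quasi_majority :: "'a set \<Rightarrow> 'a set set \<Rightarrow> ('a set \<Rightarrow> nat) \<Rightarrow> bool" where
  "quasi_majority V E c \<longleftrightarrow> (\<forall>v\<in>V. \<forall>i::nat.
     real (card {u \<in> nbhd V E v. c {v, u} = i}) \<le> of_int \<lceil>real (degree V E v) / 2\<rceil>)"

definition qm_nsd_colorable :: "'a set \<Rightarrow> 'a set set \<Rightarrow> nat \<Rightarrow> bool" where
  "qm_nsd_colorable V E k \<longleftrightarrow>
     (\<exists>c. edge_coloring E k c \<and> quasi_majority V E c \<and> nsd V E c)"

definition chi_qm_sigma :: "'a set \<Rightarrow> 'a set set \<Rightarrow> nat" where
  "chi_qm_sigma V E = (LEAST k. qm_nsd_colorable V E k)"

end

theory Submission
  imports Defs
begin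

lemma pick_avoid:
  assumes "finite X" "card X < card L"
  shows "\<exists>y\<in>L. y \<notin> X"
proof (rule ccontr)
  assume "\<not> (\<exists>y\<in>L. y \<notin> X)"
  then have "L \<subseteq> X" by blast
  then have "card L \<le> card X" using assms(1) by (rule card_mono[rotated])
  then show False using assms(2) by simp
qed

lemma card_cond: "card (if e then {c} else {}) = of_bool e"
  by simp

lemma card_cond_le: "card (if e then {c} else {}) \<le> of_bool e"
  by simp

lemma card_Un_bound: "card A \<le> a \<Longrightarrow> card B \<le> b \<Longrightarrow> card (A \<union> B) \<le> a + b"
  using card_Un_le[of A B] by linarith

lemma card_two_le: "card {a, b} \<le> 2"
  by (simp add: card_insert_if)

lemma card_one_le: "card {a} \<le> 1"
  by simp

lemma sort3:
  fixes x y z :: int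
  assumes "x \<noteq> y" "y \<noteq> z" "x \<noteq> z"
  shows "\<exists>a1 a2 a3. a1<a2 \<and> a2<a3 \<and> {a1,a2,a3} = {x,y,z}"
proof -
  have "x<y \<or> y<x" "y<z \<or> z<y" "x<z \<or> z<x" using assms by auto
  then show ?thesis
  proof (elim disjE)
  qed (auto intro: exI[of _ x] exI[of _ y] exI[of _ z] simp: insert_commute)
qed

lemma get3:
  fixes A :: "int set"
  assumes "finite A" "3 \<le> card A"
  shows "\<exists>a1 a2 a3. a1<a2 \<and> a2<a3 \<and> {a1,a2,a3} \<subseteq> A"
proof -
  obtain B where B: "B \<subseteq> A" "card B = 3" using obtain_subset_with_card_n[OF assms(2)] by blast
  then obtain x y z where "B = {x,y,z}" "x\<noteq>y" "y\<noteq>z" "x\<noteq>z" by (auto simp: card_3_iff)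
  then show ?thesis using sort3 B(1) by metis
qed

lemma LL2:
  fixes L1 L2 :: "int set" and s1 s2 :: int
  assumes "finite L1" "finite L2" "card L1 \<ge> 3 + of_bool e12" "card L2 \<ge> 3 + of_bool e12"
  shows "\<exists>x1\<in>L1. \<exists>x2\<in>L2. x1\<noteq>x2 \<and> x2 \<noteq> s1 \<and> x1 \<noteq> s2 \<and> (e12 \<longrightarrow> s1+x1 \<noteq> s2+x2)"
proof -
  obtain x1 where x1: "x1 \<in> L1" "x1 \<notin> {s2}" using pick_avoid[of "{s2}" L1] assms by auto
  let ?X = "{x1, s1} \<union> (if e12 then {s1+x1-s2} else {})"
  have "card ?X \<le> 2 + of_bool e12"
    by (intro card_Un_bound card_two_le card_cond_le)
  then obtain x2 where x2: "x2 \<in> L2" "x2 \<notin> ?X" using pick_avoid[of ?X L2] assms by fastforce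
  show ?thesis using x1 x2 by (intro bexI[of _ x1] bexI[of _ x2]) (auto split: if_splits)
qed

lemma LL3:
  fixes L1 L2 L3 :: "int set" and s1 s2 s3 :: int
  assumes "finite L1" "finite L2" "finite L3"
    "card L1 \<ge> 3 + of_bool e12 + of_bool e13"
    "card L2 \<ge> 3 + of_bool e12 + of_bool e23"
    "card L3 \<ge> 3 + of_bool e13 + of_bool e23"
  shows "\<exists>x1\<in>L1. \<exists>x2\<in>L2. \<exists>x3\<in>L3. x1\<noteq>x2 \<and> x2+x3 \<noteq> s1 \<and> x1+x3 \<noteq> s2 \<and> x1+x2 \<noteq> s3
     \<and> (e12 \<longrightarrow> s1+x1 \<noteq> s2+x2) \<and> (e13 \<longrightarrow> s1+x1 \<noteq> s3+x3) \<and> (e23 \<longrightarrow> s2+x2 \<noteq> s3+x3)"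
proof -
  obtain x1 where x1: "x1 \<in> L1" using pick_avoid[of "{}" L1] assms by auto
  let ?X = "{x1, s3-x1} \<union> (if e12 then {s1+x1-s2} else {})"
  have "card ?X \<le> 2 + of_bool e12"
    by (intro card_Un_bound card_two_le card_cond_le)
  then obtain x2 where x2: "x2 \<in> L2" "x2 \<notin> ?X" using pick_avoid[of ?X L2] assms by fastforce
  let ?Y = "{s1-x2, s2-x1} \<union> (if e13 then {s1+x1-s3} else {}) \<union> (if e23 then {s2+x2-s3} else {})"
  have "card ?Y \<le> 2 + of_bool e13 + of_bool e23"
    by (intro card_Un_bound card_two_le card_cond_le)
  then obtain x3 where x3: "x3 \<in> L3" "x3 \<notin> ?Y" using pick_avoid[of ?Y L3] assms by fastforce
  show ?thesis using x1 x2 x3 by (intro bexI[of _ x1] bexI[of _ x2] bexI[of _ x3]) (auto split: if_splits)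
qed

lemma P2diff:
  fixes a1 a2 a3 b1 b2 b3 al be de :: int
  assumes "a1<a2" "a2<a3" "b1<b2" "b2<b3"
  shows "\<exists>a\<in>{a1,a2,a3}. \<exists>b\<in>{b1,b2,b3}. a\<noteq>b \<and> a+b\<noteq>al \<and> a+b\<noteq>be \<and> a-b\<noteq>de"
  using assms by simp smt

lemma C1:
  fixes a1 a2 a3 b1 b2 b3 t1 t2 t3 :: int
  assumes "a1<a2" "a2<a3" "b1<b2" "b2<b3" "{a1,a2,a3} \<noteq> {b1,b2,b3}"
  shows "\<exists>a\<in>{a1,a2,a3}. \<exists>b\<in>{b1,b2,b3}. a\<noteq>b \<and> a+b\<noteq>t1 \<and> a+b\<noteq>t2 \<and> a+b\<noteq>t3"
proof -
  have "\<not>(a1=b1 \<and> a2=b2 \<and> a3=b3)" using assms(5) by auto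
  then show ?thesis using assms(1-4) by simp smt
qed

lemma Core0:
  fixes a1 a2 a3 b1 b2 b3 p q tB tq tp :: int
  assumes "a1<a2" "a2<a3" "b1<b2" "b2<b3"
  shows "\<exists>a\<in>{a1,a2,a3}. \<exists>b\<in>{b1,b2,b3}. a\<noteq>b \<and> p+q+b\<noteq>tB \<and> q+a+b\<noteq>tq \<and> p+a+b\<noteq>tp"
  using assms by simp smt

lemma Ph1eq:
  fixes a1 a2 a3 t :: int
  assumes "a1<a2" "a2<a3" "t \<noteq> a1+a2+a3"
  shows "\<exists>p\<in>{a1,a2,a3}. \<exists>q\<in>{a1,a2,a3}. p\<noteq>q \<and> (\<forall>y\<in>{a1,a2,a3}. p+q+y\<noteq>t)"
  using assms by simp smt

lemma sorted3_eq:
  fixes a1 a2 a3 b1 b2 b3 :: int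
  assumes "a1<a2" "a2<a3" "b1<b2" "b2<b3" "{a1,a2,a3} = {b1,b2,b3}"
  shows "a1=b1 \<and> a2=b2 \<and> a3=b3"
proof -
  have "a1 \<in> {b1,b2,b3}" "a2 \<in> {b1,b2,b3}" "a3 \<in> {b1,b2,b3}"
       "b1 \<in> {a1,a2,a3}" "b2 \<in> {a1,a2,a3}" "b3 \<in> {a1,a2,a3}" using assms(5) by blast+
  then show ?thesis using assms(1-4) by auto
qed

definition ph1pre :: "int \<Rightarrow> int \<Rightarrow> int \<Rightarrow> int \<Rightarrow> int \<Rightarrow> int \<Rightarrow> int \<Rightarrow> int \<Rightarrow> int \<Rightarrow> int \<Rightarrow> bool" where
  "ph1pre a1 a2 a3 b1 b2 b3 c1 c2 c3 t \<longleftrightarrow> {a1,a2,a3} \<noteq> {b1,b2,b3} \<or>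
     ({a1,a2,a3} = {c1,c2,c3} \<and> {b1,b2,b3} = {c1,c2,c3} \<and> t \<noteq> c1+c2+c3)"

lemma Ph1:
  fixes a1 a2 a3 b1 b2 b3 c1 c2 c3 t :: int
  assumes "a1<a2" "a2<a3" "b1<b2" "b2<b3" "c1<c2" "c2<c3" "ph1pre a1 a2 a3 b1 b2 b3 c1 c2 c3 t"
  shows "\<exists>p\<in>{a1,a2,a3}. \<exists>q\<in>{b1,b2,b3}. p\<noteq>q \<and> (\<forall>y\<in>{c1,c2,c3}. p+q+y\<noteq>t)"
proof (cases "{a1,a2,a3} \<noteq> {b1,b2,b3}")
  case True
  from C1[OF assms(1-4) True, of "t-c1" "t-c2" "t-c3"] obtain p q where
    pq: "p\<in>{a1,a2,a3}" "q\<in>{b1,b2,b3}" "p\<noteq>q" "p+q\<noteq>t-c1" "p+q\<noteq>t-c2" "p+q\<noteq>t-c3" by blast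
  have "\<forall>y\<in>{c1,c2,c3}. p+q+y\<noteq>t" using pq(4-6) by auto
  then show ?thesis using pq(1-3) by blast
next
  case False
  then have eq: "{a1,a2,a3} = {c1,c2,c3}" "{b1,b2,b3} = {c1,c2,c3}" "t \<noteq> c1+c2+c3"
    using assms(7) unfolding ph1pre_def by auto
  have "a1=c1 \<and> a2=c2 \<and> a3=c3" using sorted3_eq[OF assms(1,2,5,6) eq(1)] .
  moreover have "b1=c1 \<and> b2=c2 \<and> b3=c3" using sorted3_eq[OF assms(3,4,5,6) eq(2)] .
  ultimately show ?thesis using Ph1eq[OF assms(5,6) eq(3)] by simp
qed

definition notri4 :: "int \<Rightarrow> int \<Rightarrow> int \<Rightarrow> int \<Rightarrow> bool" where
  "notri4 x1 x2 x3 x4 \<longleftrightarrow> \<not>(x1=x2\<and>x2=x3) \<and> \<not>(x1=x2\<and>x2=x4) \<and> \<not>(x1=x3\<and>x3=x4) \<and> \<not>(x2=x3\<and>x3=x4)"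

definition glob4 :: "int \<Rightarrow> int \<Rightarrow> int \<Rightarrow> int \<Rightarrow> int \<Rightarrow> int \<Rightarrow> int \<Rightarrow> int \<Rightarrow> bool" where
  "glob4 x1 x2 x3 x4 s1 s2 s3 s4 \<longleftrightarrow> x2+x3+x4\<noteq>s1 \<and> x1+x3+x4\<noteq>s2 \<and> x1+x2+x4\<noteq>s3 \<and> x1+x2+x3\<noteq>s4"

lemma assemble4:
  "x1\<in>L1 \<Longrightarrow> x2\<in>L2 \<Longrightarrow> x3\<in>L3 \<Longrightarrow> x4\<in>L4 \<Longrightarrow> P x1 x2 x3 x4 \<Longrightarrow>
   \<exists>x1\<in>L1. \<exists>x2\<in>L2. \<exists>x3\<in>L3. \<exists>x4\<in>L4. P x1 x2 x3 x4"
  by blast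

lemma LL4_0:
  fixes L1 L2 L3 L4 :: "int set" and s1 s2 s3 s4 :: int
  assumes "finite L1" "finite L2" "finite L3" "finite L4"
    "card L1 \<ge> 3" "card L2 \<ge> 3" "card L3 \<ge> 3" "card L4 \<ge> 3"
  shows "\<exists>x1\<in>L1. \<exists>x2\<in>L2. \<exists>x3\<in>L3. \<exists>x4\<in>L4. notri4 x1 x2 x3 x4 \<and> glob4 x1 x2 x3 x4 s1 s2 s3 s4"
proof -
  obtain a1 a2 a3 where A: "a1<a2" "a2<a3" "{a1,a2,a3} \<subseteq> L1" using get3 assms by blast
  obtain b1 b2 b3 where B: "b1<b2" "b2<b3" "{b1,b2,b3} \<subseteq> L2" using get3 assms by blast
  obtain c1 c2 c3 where C: "c1<c2" "c2<c3" "{c1,c2,c3} \<subseteq> L3" using get3 assms by blast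
  obtain d1 d2 d3 where D: "d1<d2" "d2<d3" "{d1,d2,d3} \<subseteq> L4" using get3 assms by blast
  show ?thesis
  proof (cases "ph1pre a1 a2 a3 b1 b2 b3 c1 c2 c3 s4")
    case True
    from Ph1[OF A(1,2) B(1,2) C(1,2) True] obtain p q where pq: "p\<in>{a1,a2,a3}" "q\<in>{b1,b2,b3}" "p\<noteq>q"
      "\<forall>y\<in>{c1,c2,c3}. p+q+y\<noteq>s4" by blast
    from Core0[OF C(1,2) D(1,2), of p q s3 s1 s2] obtain a b where ab: "a\<in>{c1,c2,c3}" "b\<in>{d1,d2,d3}"
      "a\<noteq>b" "p+q+b\<noteq>s3" "q+a+b\<noteq>s1" "p+a+b\<noteq>s2" by blast
    have "p+q+a \<noteq> s4" using pq(4) ab(1) by blast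
    show ?thesis
      apply (rule assemble4[of p _ q _ a _ b])
      using pq(1-3) ab \<open>p+q+a \<noteq> s4\<close> A(3) B(3) C(3) D(3) by (auto simp: notri4_def glob4_def algebra_simps)
  next
    case F1: False
    show ?thesis
    proof (cases "ph1pre a1 a2 a3 b1 b2 b3 d1 d2 d3 s3")
      case True
      from Ph1[OF A(1,2) B(1,2) D(1,2) True] obtain p q where pq: "p\<in>{a1,a2,a3}" "q\<in>{b1,b2,b3}" "p\<noteq>q"
        "\<forall>y\<in>{d1,d2,d3}. p+q+y\<noteq>s3" by blast
      from Core0[OF D(1,2) C(1,2), of p q s4 s1 s2] obtain a b where ab: "a\<in>{d1,d2,d3}" "b\<in>{c1,c2,c3}"
        "a\<noteq>b" "p+q+b\<noteq>s4" "q+a+b\<noteq>s1" "p+a+b\<noteq>s2" by blast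
      have "p+q+a \<noteq> s3" using pq(4) ab(1) by blast
      show ?thesis
        apply (rule assemble4[of p _ q _ b _ a])
        using pq(1-3) ab \<open>p+q+a \<noteq> s3\<close> A(3) B(3) C(3) D(3) by (auto simp: notri4_def glob4_def algebra_simps)
    next
      case F2: False
      show ?thesis
      proof (cases "ph1pre c1 c2 c3 d1 d2 d3 a1 a2 a3 s2")
        case True
        from Ph1[OF C(1,2) D(1,2) A(1,2) True] obtain p q where pq: "p\<in>{c1,c2,c3}" "q\<in>{d1,d2,d3}" "p\<noteq>q"
          "\<forall>y\<in>{a1,a2,a3}. p+q+y\<noteq>s2" by blast
        from Core0[OF A(1,2) B(1,2), of p q s1 s3 s4] obtain a b where ab: "a\<in>{a1,a2,a3}" "b\<in>{b1,b2,b3}"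
          "a\<noteq>b" "p+q+b\<noteq>s1" "q+a+b\<noteq>s3" "p+a+b\<noteq>s4" by blast
        have "p+q+a \<noteq> s2" using pq(4) ab(1) by blast
        show ?thesis
          apply (rule assemble4[of a _ b _ p _ q])
          using pq(1-3) ab \<open>p+q+a \<noteq> s2\<close> A(3) B(3) C(3) D(3) by (auto simp: notri4_def glob4_def algebra_simps)
      next
        case F3: False
        show ?thesis
        proof (cases "ph1pre c1 c2 c3 d1 d2 d3 b1 b2 b3 s1")
          case True
          from Ph1[OF C(1,2) D(1,2) B(1,2) True] obtain p q where pq: "p\<in>{c1,c2,c3}" "q\<in>{d1,d2,d3}" "p\<noteq>q"
            "\<forall>y\<in>{b1,b2,b3}. p+q+y\<noteq>s1" by blast
          from Core0[OF B(1,2) A(1,2), of p q s2 s3 s4] obtain a b where ab: "a\<in>{b1,b2,b3}" "b\<in>{a1,a2,a3}"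
            "a\<noteq>b" "p+q+b\<noteq>s2" "q+a+b\<noteq>s3" "p+a+b\<noteq>s4" by blast
          have "p+q+a \<noteq> s1" using pq(4) ab(1) by blast
          show ?thesis
            apply (rule assemble4[of b _ a _ p _ q])
            using pq(1-3) ab \<open>p+q+a \<noteq> s1\<close> A(3) B(3) C(3) D(3) by (auto simp: notri4_def glob4_def algebra_simps)
        next
          case F4: False
          show ?thesis
          proof (cases "{a1,a2,a3} \<noteq> {c1,c2,c3}")
            case True
            from C1[OF A(1,2) C(1,2) True, of "s4-b1" "s4-b2" "s4-b3"] obtain p q where pq0:
              "p\<in>{a1,a2,a3}" "q\<in>{c1,c2,c3}" "p\<noteq>q" "p+q\<noteq>s4-b1" "p+q\<noteq>s4-b2" "p+q\<noteq>s4-b3" by blast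
            have pq: "p\<in>{a1,a2,a3}" "q\<in>{c1,c2,c3}" "p\<noteq>q" "\<forall>y\<in>{b1,b2,b3}. p+q+y\<noteq>s4"
              using pq0 by auto
            from Core0[OF B(1,2) D(1,2), of p q s2 s1 s3] obtain a b where ab: "a\<in>{b1,b2,b3}" "b\<in>{d1,d2,d3}"
              "a\<noteq>b" "p+q+b\<noteq>s2" "q+a+b\<noteq>s1" "p+a+b\<noteq>s3" by blast
            have "p+q+a \<noteq> s4" using pq(4) ab(1) by blast
            show ?thesis
              apply (rule assemble4[of p _ a _ q _ b])
              using pq(1-3) ab \<open>p+q+a \<noteq> s4\<close> A(3) B(3) C(3) D(3) by (auto simp: notri4_def glob4_def algebra_simps)
          next
            case F5: False
            have e1: "{a1,a2,a3} = {b1,b2,b3}" using F1 unfolding ph1pre_def by blast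
            have e2: "{c1,c2,c3} = {d1,d2,d3}" using F3 unfolding ph1pre_def by blast
            have e3: "{a1,a2,a3} = {c1,c2,c3}" using F5 by blast
            have s4: "s4 = c1+c2+c3" using F1 e1 e3 unfolding ph1pre_def by auto
            have s3: "s3 = d1+d2+d3" using F2 e1 e2 e3 unfolding ph1pre_def by auto
            have s2: "s2 = a1+a2+a3" using F3 e1 e2 e3 unfolding ph1pre_def by auto
            have s1: "s1 = b1+b2+b3" using F4 e1 e2 e3 unfolding ph1pre_def by auto
            have q1: "a1=b1 \<and> a2=b2 \<and> a3=b3" using sorted3_eq[OF A(1,2) B(1,2) e1] .
            have q2: "a1=c1 \<and> a2=c2 \<and> a3=c3" using sorted3_eq[OF A(1,2) C(1,2) e3] .
            have q3: "c1=d1 \<and> c2=d2 \<and> c3=d3" using sorted3_eq[OF C(1,2) D(1,2) e2] .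
            have m: "a1 \<in> L1" "a2 \<in> L2" "a1 \<in> L3" "a2 \<in> L4" using A(3) B(3) C(3) D(3) q1 q2 q3 by auto
            show ?thesis
              apply (rule assemble4[OF m])
              using A(1,2) s1 s2 s3 s4 q1 q2 q3 by (auto simp: notri4_def glob4_def)
          qed
        qed
      qed
    qed
  qed
qed

lemma LL4_34:
  fixes L1 L2 L3 L4 :: "int set" and s1 s2 s3 s4 :: int
  assumes "finite L1" "finite L2" "finite L3" "finite L4"
    "card L1 \<ge> 3 + of_bool e12 + of_bool e13 + of_bool e14"
    "card L2 \<ge> 3 + of_bool e12 + of_bool e23 + of_bool e24"
    "card L3 \<ge> 3 + of_bool e13 + of_bool e23 + 1"
    "card L4 \<ge> 3 + of_bool e14 + of_bool e24 + 1"
  shows "\<exists>x1\<in>L1. \<exists>x2\<in>L2. \<exists>x3\<in>L3. \<exists>x4\<in>L4. notri4 x1 x2 x3 x4 \<and> glob4 x1 x2 x3 x4 s1 s2 s3 s4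
     \<and> (e12 \<longrightarrow> s1+x1 \<noteq> s2+x2) \<and> (e13 \<longrightarrow> s1+x1 \<noteq> s3+x3) \<and> (e14 \<longrightarrow> s1+x1 \<noteq> s4+x4)
     \<and> (e23 \<longrightarrow> s2+x2 \<noteq> s3+x3) \<and> (e24 \<longrightarrow> s2+x2 \<noteq> s4+x4) \<and> s3+x3 \<noteq> s4+x4"
proof -
  obtain x1 where x1: "x1 \<in> L1" using pick_avoid[of "{}" L1] assms by auto
  let ?X = "{x1} \<union> (if e12 then {s1+x1-s2} else {})"
  have "card ?X \<le> 1 + of_bool e12"
    by (intro card_Un_bound card_one_le card_cond_le)
  then obtain x2 where x2: "x2 \<in> L2" "x2 \<notin> ?X" using pick_avoid[of ?X L2] assms by fastforce
  let ?X3 = "{s4-x1-x2} \<union> (if e13 then {s1+x1-s3} else {}) \<union> (if e23 then {s2+x2-s3} else {})"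
  have cX3: "card ?X3 \<le> 1 + of_bool e13 + of_bool e23"
    by (intro card_Un_bound card_one_le card_cond_le)
  have "card L3 - card ?X3 \<le> card (L3 - ?X3)" by (rule diff_card_le_card_Diff) auto
  then have "3 \<le> card (L3 - ?X3)" using cX3 assms(7) by linarith
  then obtain c1 c2 c3 where C: "c1<c2" "c2<c3" "{c1,c2,c3} \<subseteq> L3 - ?X3" using get3 assms(3) by blast
  let ?X4 = "{s3-x1-x2} \<union> (if e14 then {s1+x1-s4} else {}) \<union> (if e24 then {s2+x2-s4} else {})"
  have cX4: "card ?X4 \<le> 1 + of_bool e14 + of_bool e24"
    by (intro card_Un_bound card_one_le card_cond_le)
  have "card L4 - card ?X4 \<le> card (L4 - ?X4)" by (rule diff_card_le_card_Diff) auto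
  then have "3 \<le> card (L4 - ?X4)" using cX4 assms(8) by linarith
  then obtain d1 d2 d3 where D: "d1<d2" "d2<d3" "{d1,d2,d3} \<subseteq> L4 - ?X4" using get3 assms(4) by blast
  from P2diff[OF C(1,2) D(1,2), of "s1-x2" "s2-x1" "s4-s3"] obtain a b where ab:
    "a\<in>{c1,c2,c3}" "b\<in>{d1,d2,d3}" "a\<noteq>b" "a+b\<noteq>s1-x2" "a+b\<noteq>s2-x1" "a-b\<noteq>s4-s3" by blast
  have a: "a \<in> L3" "a \<notin> ?X3" using ab(1) C(3) by auto
  have b: "b \<in> L4" "b \<notin> ?X4" using ab(2) D(3) by auto
  show ?thesis
    apply (rule assemble4[of x1 _ x2 _ a _ b])
    using x1 x2 a b ab(3-6) by (auto simp: notri4_def glob4_def algebra_simps split: if_splits)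
qed

lemma LL4:
  fixes L1 L2 L3 L4 :: "int set" and s1 s2 s3 s4 :: int
  assumes "finite L1" "finite L2" "finite L3" "finite L4"
    "card L1 \<ge> 3 + of_bool e12 + of_bool e13 + of_bool e14"
    "card L2 \<ge> 3 + of_bool e12 + of_bool e23 + of_bool e24"
    "card L3 \<ge> 3 + of_bool e13 + of_bool e23 + of_bool e34"
    "card L4 \<ge> 3 + of_bool e14 + of_bool e24 + of_bool e34"
  shows "\<exists>x1\<in>L1. \<exists>x2\<in>L2. \<exists>x3\<in>L3. \<exists>x4\<in>L4. notri4 x1 x2 x3 x4 \<and> glob4 x1 x2 x3 x4 s1 s2 s3 s4
     \<and> (e12 \<longrightarrow> s1+x1 \<noteq> s2+x2) \<and> (e13 \<longrightarrow> s1+x1 \<noteq> s3+x3) \<and> (e14 \<longrightarrow> s1+x1 \<noteq> s4+x4)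
     \<and> (e23 \<longrightarrow> s2+x2 \<noteq> s3+x3) \<and> (e24 \<longrightarrow> s2+x2 \<noteq> s4+x4) \<and> (e34 \<longrightarrow> s3+x3 \<noteq> s4+x4)"
proof -

  have E34: ?thesis if "e34"
  proof -
    have "\<exists>y1\<in>L1. \<exists>y2\<in>L2. \<exists>y3\<in>L3. \<exists>y4\<in>L4. notri4 y1 y2 y3 y4 \<and> glob4 y1 y2 y3 y4 s1 s2 s3 s4 \<and> (e12 \<longrightarrow> s1+y1 \<noteq> s2+y2) \<and> (e13 \<longrightarrow> s1+y1 \<noteq> s3+y3) \<and> (e14 \<longrightarrow> s1+y1 \<noteq> s4+y4) \<and> (e23 \<longrightarrow> s2+y2 \<noteq> s3+y3) \<and> (e24 \<longrightarrow> s2+y2 \<noteq> s4+y4) \<and> s3+y3 \<noteq> s4+y4"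
      apply (rule LL4_34)
      using assms that apply simp_all
      done
    then obtain y1 y2 y3 y4 where Y: "y1\<in>L1" "y2\<in>L2" "y3\<in>L3" "y4\<in>L4"
      "notri4 y1 y2 y3 y4 \<and> glob4 y1 y2 y3 y4 s1 s2 s3 s4 \<and> (e12 \<longrightarrow> s1+y1 \<noteq> s2+y2) \<and> (e13 \<longrightarrow> s1+y1 \<noteq> s3+y3) \<and> (e14 \<longrightarrow> s1+y1 \<noteq> s4+y4) \<and> (e23 \<longrightarrow> s2+y2 \<noteq> s3+y3) \<and> (e24 \<longrightarrow> s2+y2 \<noteq> s4+y4) \<and> s3+y3 \<noteq> s4+y4" by blast
    have NN: "notri4 y1 y2 y3 y4" using Y(5) unfolding notri4_def by blast
    show ?thesis
      using Y that NN unfolding glob4_def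
      by - (rule assemble4[of y1 _ y2 _ y3 _ y4], simp_all add: ac_simps eq_commute)
  qed
  have E12: ?thesis if "e12"
  proof -
    have "\<exists>y1\<in>L3. \<exists>y2\<in>L4. \<exists>y3\<in>L1. \<exists>y4\<in>L2. notri4 y1 y2 y3 y4 \<and> glob4 y1 y2 y3 y4 s3 s4 s1 s2 \<and> (e34 \<longrightarrow> s3+y1 \<noteq> s4+y2) \<and> (e13 \<longrightarrow> s3+y1 \<noteq> s1+y3) \<and> (e23 \<longrightarrow> s3+y1 \<noteq> s2+y4) \<and> (e14 \<longrightarrow> s4+y2 \<noteq> s1+y3) \<and> (e24 \<longrightarrow> s4+y2 \<noteq> s2+y4) \<and> s1+y3 \<noteq> s2+y4"
      apply (rule LL4_34)
      using assms that apply simp_all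
      done
    then obtain y1 y2 y3 y4 where Y: "y1\<in>L3" "y2\<in>L4" "y3\<in>L1" "y4\<in>L2"
      "notri4 y1 y2 y3 y4 \<and> glob4 y1 y2 y3 y4 s3 s4 s1 s2 \<and> (e34 \<longrightarrow> s3+y1 \<noteq> s4+y2) \<and> (e13 \<longrightarrow> s3+y1 \<noteq> s1+y3) \<and> (e23 \<longrightarrow> s3+y1 \<noteq> s2+y4) \<and> (e14 \<longrightarrow> s4+y2 \<noteq> s1+y3) \<and> (e24 \<longrightarrow> s4+y2 \<noteq> s2+y4) \<and> s1+y3 \<noteq> s2+y4" by blast
    have NN: "notri4 y3 y4 y1 y2" using Y(5) unfolding notri4_def by blast
    show ?thesis
      using Y that NN unfolding glob4_def
      by - (rule assemble4[of y3 _ y4 _ y1 _ y2], simp_all add: ac_simps eq_commute)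
  qed
  have E13: ?thesis if "e13"
  proof -
    have "\<exists>y1\<in>L2. \<exists>y2\<in>L4. \<exists>y3\<in>L1. \<exists>y4\<in>L3. notri4 y1 y2 y3 y4 \<and> glob4 y1 y2 y3 y4 s2 s4 s1 s3 \<and> (e24 \<longrightarrow> s2+y1 \<noteq> s4+y2) \<and> (e12 \<longrightarrow> s2+y1 \<noteq> s1+y3) \<and> (e23 \<longrightarrow> s2+y1 \<noteq> s3+y4) \<and> (e14 \<longrightarrow> s4+y2 \<noteq> s1+y3) \<and> (e34 \<longrightarrow> s4+y2 \<noteq> s3+y4) \<and> s1+y3 \<noteq> s3+y4"
      apply (rule LL4_34)
      using assms that apply simp_all
      done
    then obtain y1 y2 y3 y4 where Y: "y1\<in>L2" "y2\<in>L4" "y3\<in>L1" "y4\<in>L3"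
      "notri4 y1 y2 y3 y4 \<and> glob4 y1 y2 y3 y4 s2 s4 s1 s3 \<and> (e24 \<longrightarrow> s2+y1 \<noteq> s4+y2) \<and> (e12 \<longrightarrow> s2+y1 \<noteq> s1+y3) \<and> (e23 \<longrightarrow> s2+y1 \<noteq> s3+y4) \<and> (e14 \<longrightarrow> s4+y2 \<noteq> s1+y3) \<and> (e34 \<longrightarrow> s4+y2 \<noteq> s3+y4) \<and> s1+y3 \<noteq> s3+y4" by blast
    have NN: "notri4 y3 y1 y4 y2" using Y(5) unfolding notri4_def by blast
    show ?thesis
      using Y that NN unfolding glob4_def
      by - (rule assemble4[of y3 _ y1 _ y4 _ y2], simp_all add: ac_simps eq_commute)
  qed
  have E14: ?thesis if "e14"
  proof -
    have "\<exists>y1\<in>L2. \<exists>y2\<in>L3. \<exists>y3\<in>L1. \<exists>y4\<in>L4. notri4 y1 y2 y3 y4 \<and> glob4 y1 y2 y3 y4 s2 s3 s1 s4 \<and> (e23 \<longrightarrow> s2+y1 \<noteq> s3+y2) \<and> (e12 \<longrightarrow> s2+y1 \<noteq> s1+y3) \<and> (e24 \<longrightarrow> s2+y1 \<noteq> s4+y4) \<and> (e13 \<longrightarrow> s3+y2 \<noteq> s1+y3) \<and> (e34 \<longrightarrow> s3+y2 \<noteq> s4+y4) \<and> s1+y3 \<noteq> s4+y4"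
      apply (rule LL4_34)
      using assms that apply simp_all
      done
    then obtain y1 y2 y3 y4 where Y: "y1\<in>L2" "y2\<in>L3" "y3\<in>L1" "y4\<in>L4"
      "notri4 y1 y2 y3 y4 \<and> glob4 y1 y2 y3 y4 s2 s3 s1 s4 \<and> (e23 \<longrightarrow> s2+y1 \<noteq> s3+y2) \<and> (e12 \<longrightarrow> s2+y1 \<noteq> s1+y3) \<and> (e24 \<longrightarrow> s2+y1 \<noteq> s4+y4) \<and> (e13 \<longrightarrow> s3+y2 \<noteq> s1+y3) \<and> (e34 \<longrightarrow> s3+y2 \<noteq> s4+y4) \<and> s1+y3 \<noteq> s4+y4" by blast
    have NN: "notri4 y3 y1 y2 y4" using Y(5) unfolding notri4_def by blast
    show ?thesis
      using Y that NN unfolding glob4_def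
      by - (rule assemble4[of y3 _ y1 _ y2 _ y4], simp_all add: ac_simps eq_commute)
  qed
  have E23: ?thesis if "e23"
  proof -
    have "\<exists>y1\<in>L1. \<exists>y2\<in>L4. \<exists>y3\<in>L2. \<exists>y4\<in>L3. notri4 y1 y2 y3 y4 \<and> glob4 y1 y2 y3 y4 s1 s4 s2 s3 \<and> (e14 \<longrightarrow> s1+y1 \<noteq> s4+y2) \<and> (e12 \<longrightarrow> s1+y1 \<noteq> s2+y3) \<and> (e13 \<longrightarrow> s1+y1 \<noteq> s3+y4) \<and> (e24 \<longrightarrow> s4+y2 \<noteq> s2+y3) \<and> (e34 \<longrightarrow> s4+y2 \<noteq> s3+y4) \<and> s2+y3 \<noteq> s3+y4"
      apply (rule LL4_34)
      using assms that apply simp_all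
      done
    then obtain y1 y2 y3 y4 where Y: "y1\<in>L1" "y2\<in>L4" "y3\<in>L2" "y4\<in>L3"
      "notri4 y1 y2 y3 y4 \<and> glob4 y1 y2 y3 y4 s1 s4 s2 s3 \<and> (e14 \<longrightarrow> s1+y1 \<noteq> s4+y2) \<and> (e12 \<longrightarrow> s1+y1 \<noteq> s2+y3) \<and> (e13 \<longrightarrow> s1+y1 \<noteq> s3+y4) \<and> (e24 \<longrightarrow> s4+y2 \<noteq> s2+y3) \<and> (e34 \<longrightarrow> s4+y2 \<noteq> s3+y4) \<and> s2+y3 \<noteq> s3+y4" by blast
    have NN: "notri4 y1 y3 y4 y2" using Y(5) unfolding notri4_def by blast
    show ?thesis
      using Y that NN unfolding glob4_def
      by - (rule assemble4[of y1 _ y3 _ y4 _ y2], simp_all add: ac_simps eq_commute)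
  qed
  have E24: ?thesis if "e24"
  proof -
    have "\<exists>y1\<in>L1. \<exists>y2\<in>L3. \<exists>y3\<in>L2. \<exists>y4\<in>L4. notri4 y1 y2 y3 y4 \<and> glob4 y1 y2 y3 y4 s1 s3 s2 s4 \<and> (e13 \<longrightarrow> s1+y1 \<noteq> s3+y2) \<and> (e12 \<longrightarrow> s1+y1 \<noteq> s2+y3) \<and> (e14 \<longrightarrow> s1+y1 \<noteq> s4+y4) \<and> (e23 \<longrightarrow> s3+y2 \<noteq> s2+y3) \<and> (e34 \<longrightarrow> s3+y2 \<noteq> s4+y4) \<and> s2+y3 \<noteq> s4+y4"
      apply (rule LL4_34)
      using assms that apply simp_all
      done
    then obtain y1 y2 y3 y4 where Y: "y1\<in>L1" "y2\<in>L3" "y3\<in>L2" "y4\<in>L4"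
      "notri4 y1 y2 y3 y4 \<and> glob4 y1 y2 y3 y4 s1 s3 s2 s4 \<and> (e13 \<longrightarrow> s1+y1 \<noteq> s3+y2) \<and> (e12 \<longrightarrow> s1+y1 \<noteq> s2+y3) \<and> (e14 \<longrightarrow> s1+y1 \<noteq> s4+y4) \<and> (e23 \<longrightarrow> s3+y2 \<noteq> s2+y3) \<and> (e34 \<longrightarrow> s3+y2 \<noteq> s4+y4) \<and> s2+y3 \<noteq> s4+y4" by blast
    have NN: "notri4 y1 y3 y2 y4" using Y(5) unfolding notri4_def by blast
    show ?thesis
      using Y that NN unfolding glob4_def
      by - (rule assemble4[of y1 _ y3 _ y2 _ y4], simp_all add: ac_simps eq_commute)
  qed
  show ?thesis
  proof (cases "e12 \<or> e13 \<or> e14 \<or> e23 \<or> e24 \<or> e34")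
    case True
    then show ?thesis using E12 E13 E14 E23 E24 E34 by blast
  next
    case False
    then have "\<not>e12" "\<not>e13" "\<not>e14" "\<not>e23" "\<not>e24" "\<not>e34" by auto
    then show ?thesis using LL4_0[OF assms(1-4), of s1 s2 s3 s4] assms(5-8) by simp
  qed
qed

lemma card2_obt: "card N = 2 \<Longrightarrow> \<exists>a b. N = {a,b} \<and> a\<noteq>b"
  by (metis card_2_iff)

lemma card3_obt: "card N = 3 \<Longrightarrow> \<exists>a b c. N = {a,b,c} \<and> a\<noteq>b \<and> a\<noteq>c \<and> b\<noteq>c"
  by (metis card_3_iff)

lemma card4_obt: "card N = 4 \<Longrightarrow> \<exists>a b c d. N = {a,b,c,d} \<and> a\<noteq>b \<and> a\<noteq>c \<and> a\<noteq>d \<and> b\<noteq>c \<and> b\<noteq>d \<and> c\<noteq>d"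
proof -
  assume "card N = 4"
  then have "card N = Suc 3" by simp
  then obtain a B where B: "N = insert a B" "a \<notin> B" "card B = 3" using card_eq_SucD by blast
  then obtain b c d where "B = {b,c,d}" "b\<noteq>c" "b\<noteq>d" "c\<noteq>d" using card3_obt by blast
  then show ?thesis using B by blast
qed

lemma card_filter_insert:
  "finite A \<Longrightarrow> a \<notin> A \<Longrightarrow> card {w \<in> insert a A. P w} = of_bool (P a) + card {w\<in>A. P w}"
proof (cases "P a")
  case True
  assume "finite A" "a \<notin> A"
  then have "{w \<in> insert a A. P w} = insert a {w\<in>A. P w}" using True by auto
  then show ?thesis using \<open>finite A\<close> \<open>a \<notin> A\<close> True by simp
next
  case False
  assume "finite A" "a \<notin> A"
  then have "{w \<in> insert a A. P w} = {w\<in>A. P w}" using False by auto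
  then show ?thesis using False by simp
qed

lemma card_filter_distinct: "distinct xs \<Longrightarrow> card {w \<in> set xs. P w} = length (filter P xs)"
proof -
  assume "distinct xs"
  have "{w \<in> set xs. P w} = set (filter P xs)" by auto
  then show ?thesis using \<open>distinct xs\<close> distinct_card[of "filter P xs"] by simp
qed

lemma lf2: "length (filter P [a,b]) = of_bool (P a) + of_bool (P b)"
  by (cases "P a"; cases "P b") simp_all
lemma lf3: "length (filter P [a,b,c]) = of_bool (P a) + of_bool (P b) + of_bool (P c)"
  by (cases "P a"; cases "P b"; cases "P c") simp_all
lemma lf4: "length (filter P [a,b,c,d]) = of_bool (P a) + of_bool (P b) + of_bool (P c) + of_bool (P d)"
  by (cases "P a"; cases "P b"; cases "P c"; cases "P d") simp_all

lemma card_filter_empty: "card {w \<in> {}. P w} = 0" by simp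


lemma LLN:
  fixes N :: "'a set" and L :: "'a \<Rightarrow> int set" and s :: "'a \<Rightarrow> int" and adj :: "'a \<Rightarrow> 'a \<Rightarrow> bool"
  assumes fin: "finite N" and c4: "card N \<le> 4" and finL: "\<forall>u\<in>N. finite (L u)"
    and cL: "\<forall>u\<in>N. card (L u) \<ge> 3 + card {w\<in>N. adj u w}"
    and sym: "\<And>u w. adj u w = adj w u" and irr: "\<And>u. \<not> adj u u"
  shows "\<exists>f. (\<forall>u\<in>N. f u \<in> L u) \<and> (\<forall>u\<in>N. \<forall>w\<in>N. adj u w \<longrightarrow> s u + f u \<noteq> s w + f w)
     \<and> (2 \<le> card N \<longrightarrow> (\<forall>u\<in>N. sum f N \<noteq> s u + f u)) \<and> (\<forall>j. 2 * card {u\<in>N. f u = j} \<le> card N + 1)"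
proof -
  have "card N = 0 \<or> card N = 1 \<or> card N = 2 \<or> card N = 3 \<or> card N = 4" using c4 by arith
  then show ?thesis
  proof (elim disjE)
    assume "card N = 0"
    then have "N = {}" using fin by simp
    then show ?thesis by simp
  next
    assume "card N = 1"
    then obtain u1 where N: "N = {u1}" by (metis card_1_singletonE)
    have "card (L u1) \<ge> 3" using cL N by auto
    then obtain x1 where x1: "x1 \<in> L u1" using pick_avoid[of "{}" "L u1"] by auto
    have qm: "2 * card {u\<in>N. (\<lambda>_. x1) u = j} \<le> card N + 1" for j
    proof -
      have "card {u\<in>N. (\<lambda>_. x1) u = j} \<le> card N" by (rule card_mono[OF fin]) auto
      then show ?thesis using \<open>card N = 1\<close> by linarith
    qed
    have "\<forall>u\<in>N. (\<lambda>_. x1) u \<in> L u" using x1 N by auto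
    moreover have "\<forall>u\<in>N. \<forall>w\<in>N. adj u w \<longrightarrow> s u + (\<lambda>_. x1) u \<noteq> s w + (\<lambda>_. x1) w" using N irr by auto
    ultimately show ?thesis using qm \<open>card N = 1\<close> by (intro exI[of _ "\<lambda>_. x1"]) auto
  next
    assume "card N = 2"
    then obtain u1 u2 where N: "N = {u1,u2}" and d: "u1\<noteq>u2" using card2_obt by blast
    have NL: "N = set [u1,u2]" "distinct [u1,u2]" using N d by auto
    have s': "adj u2 u1 = adj u1 u2" using sym by auto
    have k: "card {w\<in>N. adj u w} = length (filter (adj u) [u1,u2])" for u
      using card_filter_distinct[OF NL(2)] NL(1) by simp
    have k1: "card {w\<in>N. adj u1 w} = of_bool (adj u1 u2)"
    proof -
      have "card {w\<in>N. adj u1 w} = length (filter (adj u1) [u1,u2])" by (rule k)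
      also have "\<dots> = of_bool (adj u1 u1) + of_bool (adj u1 u2)" by (rule lf2)
      finally show ?thesis using irr s' by simp
    qed
    have c1: "card (L u1) \<ge> 3 + of_bool (adj u1 u2)"
      using cL N k1 by simp
    have k2: "card {w\<in>N. adj u2 w} = of_bool (adj u1 u2)"
    proof -
      have "card {w\<in>N. adj u2 w} = length (filter (adj u2) [u1,u2])" by (rule k)
      also have "\<dots> = of_bool (adj u2 u1) + of_bool (adj u2 u2)" by (rule lf2)
      finally show ?thesis using irr s' by simp
    qed
    have c2: "card (L u2) \<ge> 3 + of_bool (adj u1 u2)"
      using cL N k2 by simp
    obtain x1 x2 where X: "x1 \<in> L u1" "x2 \<in> L u2" "x1\<noteq>x2" "x2 \<noteq> s u1" "x1 \<noteq> s u2"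
        "adj u1 u2 \<longrightarrow> s u1 + x1 \<noteq> s u2 + x2"
      using LL2[of "L u1" "L u2" "adj u1 u2" "s u1" "s u2"] c1 c2 finL N by auto
    define f where "f = (\<lambda>u. if u = u1 then x1 else x2)"
    have fx: "f u1 = x1" "f u2 = x2" using d by (simp_all add: f_def)
    have qm: "2 * card {u\<in>N. f u = j} \<le> card N + 1" for j
    proof -
      have "card {u\<in>N. f u = j} = length (filter (\<lambda>u. f u = j) [u1,u2])"
        unfolding NL(1) by (rule card_filter_distinct[OF NL(2)])
      also have "\<dots> = of_bool (f u1 = j) + of_bool (f u2 = j)" by (rule lf2)
      also have "\<dots> = of_bool (x1 = j) + of_bool (x2 = j)" using d by (simp add: f_def)
      finally have cc: "card {u\<in>N. f u = j} = of_bool (x1 = j) + of_bool (x2 = j)" .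
      show ?thesis using X(3) cc \<open>card N = 2\<close> by (cases "x1 = j"; cases "x2 = j") simp_all
    qed
    have FL: "(\<forall>u\<in>N. f u \<in> L u)" using X N d by (auto simp: fx)
    define P where "P u w \<longleftrightarrow> (adj u w \<longrightarrow> s u + f u \<noteq> s w + f w)" for u w
    have Psym: "P u w \<Longrightarrow> P w u" for u w unfolding P_def using sym[of u w] by auto
    have Pd: "P u u" for u unfolding P_def using irr by auto
    have P0: "P u1 u2"
      unfolding P_def using X fx by auto
    have Pall: "P u1 u1" "P u1 u2" "P u2 u1" "P u2 u2" using P0 Psym Pd by blast+
    have Pq: "\<forall>u\<in>N. \<forall>w\<in>N. P u w" unfolding N using Pall by blast
    have BF: "(\<forall>u\<in>N. \<forall>w\<in>N. adj u w \<longrightarrow> s u + f u \<noteq> s w + f w)"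
      using Pq unfolding P_def .
    have SM: "(\<forall>u\<in>N. sum f N \<noteq> s u + f u)"
      using X N d by (auto simp: fx)
    show ?thesis using qm FL BF SM by blast
  next
    assume "card N = 3"
    then obtain u1 u2 u3 where N: "N = {u1,u2,u3}" and d: "u1\<noteq>u2" "u1\<noteq>u3" "u2\<noteq>u3" using card3_obt by blast
    have s': "adj u2 u1 = adj u1 u2" "adj u3 u1 = adj u1 u3" "adj u3 u2 = adj u2 u3" using sym by auto
    have NL: "N = set [u1,u2,u3]" "distinct [u1,u2,u3]" using N d by auto
    have k: "card {w\<in>N. adj u w} = length (filter (adj u) [u1,u2,u3])" for u
      using card_filter_distinct[OF NL(2)] NL(1) by simp
    have k1: "card {w\<in>N. adj u1 w} = of_bool (adj u1 u2) + of_bool (adj u1 u3)"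
    proof -
      have "card {w\<in>N. adj u1 w} = length (filter (adj u1) [u1,u2,u3])" by (rule k)
      also have "\<dots> = of_bool (adj u1 u1) + of_bool (adj u1 u2) + of_bool (adj u1 u3)" by (rule lf3)
      finally show ?thesis using irr s' by simp
    qed
    have c1: "card (L u1) \<ge> 3 + of_bool (adj u1 u2) + of_bool (adj u1 u3)"
      using cL N k1 by simp
    have k2: "card {w\<in>N. adj u2 w} = of_bool (adj u1 u2) + of_bool (adj u2 u3)"
    proof -
      have "card {w\<in>N. adj u2 w} = length (filter (adj u2) [u1,u2,u3])" by (rule k)
      also have "\<dots> = of_bool (adj u2 u1) + of_bool (adj u2 u2) + of_bool (adj u2 u3)" by (rule lf3)
      finally show ?thesis using irr s' by simp
    qed
    have c2: "card (L u2) \<ge> 3 + of_bool (adj u1 u2) + of_bool (adj u2 u3)"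
      using cL N k2 by simp
    have k3: "card {w\<in>N. adj u3 w} = of_bool (adj u1 u3) + of_bool (adj u2 u3)"
    proof -
      have "card {w\<in>N. adj u3 w} = length (filter (adj u3) [u1,u2,u3])" by (rule k)
      also have "\<dots> = of_bool (adj u3 u1) + of_bool (adj u3 u2) + of_bool (adj u3 u3)" by (rule lf3)
      finally show ?thesis using irr s' by simp
    qed
    have c3: "card (L u3) \<ge> 3 + of_bool (adj u1 u3) + of_bool (adj u2 u3)"
      using cL N k3 by simp
    obtain x1 x2 x3 where X: "x1 \<in> L u1" "x2 \<in> L u2" "x3 \<in> L u3" "x1\<noteq>x2" "x2+x3 \<noteq> s u1" "x1+x3 \<noteq> s u2"
        "x1+x2 \<noteq> s u3"
        "adj u1 u2 \<longrightarrow> s u1 + x1 \<noteq> s u2 + x2" "adj u1 u3 \<longrightarrow> s u1 + x1 \<noteq> s u3 + x3"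
        "adj u2 u3 \<longrightarrow> s u2 + x2 \<noteq> s u3 + x3"
      using LL3[of "L u1" "L u2" "L u3" "adj u1 u2" "adj u1 u3" "adj u2 u3" "s u1" "s u2" "s u3"] c1 c2 c3 finL N
      by auto
    define f where "f = (\<lambda>u. if u = u1 then x1 else if u = u2 then x2 else x3)"
    have fx: "f u1 = x1" "f u2 = x2" "f u3 = x3" using d by (simp_all add: f_def)
    have qm: "2 * card {u\<in>N. f u = j} \<le> card N + 1" for j
    proof -
      have "card {u\<in>N. f u = j} = length (filter (\<lambda>u. f u = j) [u1,u2,u3])"
        unfolding NL(1) by (rule card_filter_distinct[OF NL(2)])
      also have "\<dots> = of_bool (f u1 = j) + of_bool (f u2 = j) + of_bool (f u3 = j)" by (rule lf3)
      also have "\<dots> = of_bool (x1 = j) + of_bool (x2 = j) + of_bool (x3 = j)" using d by (simp add: f_def)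
      finally have cc: "card {u\<in>N. f u = j} = of_bool (x1 = j) + of_bool (x2 = j) + of_bool (x3 = j)" .
      show ?thesis using X(4) cc \<open>card N = 3\<close> by (cases "x1 = j"; cases "x2 = j"; cases "x3 = j") simp_all
    qed
    have FL: "(\<forall>u\<in>N. f u \<in> L u)" using X N d by (auto simp: fx)
    define P where "P u w \<longleftrightarrow> (adj u w \<longrightarrow> s u + f u \<noteq> s w + f w)" for u w
    have Psym: "P u w \<Longrightarrow> P w u" for u w unfolding P_def using sym[of u w] by auto
    have Pd: "P u u" for u unfolding P_def using irr by auto
    have P0: "P u1 u2" "P u1 u3" "P u2 u3"
      unfolding P_def using X fx by auto
    have Pall: "P u1 u1" "P u1 u2" "P u1 u3" "P u2 u1" "P u2 u2" "P u2 u3" "P u3 u1" "P u3 u2" "P u3 u3" using P0 Psym Pd by blast+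
    have Pq: "\<forall>u\<in>N. \<forall>w\<in>N. P u w" unfolding N using Pall by blast
    have BF: "(\<forall>u\<in>N. \<forall>w\<in>N. adj u w \<longrightarrow> s u + f u \<noteq> s w + f w)"
      using Pq unfolding P_def .
    have SM: "(\<forall>u\<in>N. sum f N \<noteq> s u + f u)"
      using X N d by (auto simp: fx algebra_simps)
    show ?thesis using qm FL BF SM by blast
  next
    assume "card N = 4"
    then obtain u1 u2 u3 u4 where N: "N = {u1,u2,u3,u4}" and
      d: "u1\<noteq>u2" "u1\<noteq>u3" "u1\<noteq>u4" "u2\<noteq>u3" "u2\<noteq>u4" "u3\<noteq>u4" using card4_obt by blast
    have s': "adj u2 u1 = adj u1 u2" "adj u3 u1 = adj u1 u3" "adj u4 u1 = adj u1 u4"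
      "adj u3 u2 = adj u2 u3" "adj u4 u2 = adj u2 u4" "adj u4 u3 = adj u3 u4" using sym by auto
    have NL: "N = set [u1,u2,u3,u4]" "distinct [u1,u2,u3,u4]" using N d by auto
    have k: "card {w\<in>N. adj u w} = length (filter (adj u) [u1,u2,u3,u4])" for u
      using card_filter_distinct[OF NL(2)] NL(1) by simp
    have k1: "card {w\<in>N. adj u1 w} = of_bool (adj u1 u2) + of_bool (adj u1 u3) + of_bool (adj u1 u4)"
    proof -
      have "card {w\<in>N. adj u1 w} = length (filter (adj u1) [u1,u2,u3,u4])" by (rule k)
      also have "\<dots> = of_bool (adj u1 u1) + of_bool (adj u1 u2) + of_bool (adj u1 u3) + of_bool (adj u1 u4)" by (rule lf4)
      finally show ?thesis using irr s' by simp
    qed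
    have c1: "card (L u1) \<ge> 3 + of_bool (adj u1 u2) + of_bool (adj u1 u3) + of_bool (adj u1 u4)"
      using cL N k1 by simp
    have k2: "card {w\<in>N. adj u2 w} = of_bool (adj u1 u2) + of_bool (adj u2 u3) + of_bool (adj u2 u4)"
    proof -
      have "card {w\<in>N. adj u2 w} = length (filter (adj u2) [u1,u2,u3,u4])" by (rule k)
      also have "\<dots> = of_bool (adj u2 u1) + of_bool (adj u2 u2) + of_bool (adj u2 u3) + of_bool (adj u2 u4)" by (rule lf4)
      finally show ?thesis using irr s' by simp
    qed
    have c2: "card (L u2) \<ge> 3 + of_bool (adj u1 u2) + of_bool (adj u2 u3) + of_bool (adj u2 u4)"
      using cL N k2 by simp
    have k3: "card {w\<in>N. adj u3 w} = of_bool (adj u1 u3) + of_bool (adj u2 u3) + of_bool (adj u3 u4)"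
    proof -
      have "card {w\<in>N. adj u3 w} = length (filter (adj u3) [u1,u2,u3,u4])" by (rule k)
      also have "\<dots> = of_bool (adj u3 u1) + of_bool (adj u3 u2) + of_bool (adj u3 u3) + of_bool (adj u3 u4)" by (rule lf4)
      finally show ?thesis using irr s' by simp
    qed
    have c3: "card (L u3) \<ge> 3 + of_bool (adj u1 u3) + of_bool (adj u2 u3) + of_bool (adj u3 u4)"
      using cL N k3 by simp
    have k4: "card {w\<in>N. adj u4 w} = of_bool (adj u1 u4) + of_bool (adj u2 u4) + of_bool (adj u3 u4)"
    proof -
      have "card {w\<in>N. adj u4 w} = length (filter (adj u4) [u1,u2,u3,u4])" by (rule k)
      also have "\<dots> = of_bool (adj u4 u1) + of_bool (adj u4 u2) + of_bool (adj u4 u3) + of_bool (adj u4 u4)" by (rule lf4)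
      finally show ?thesis using irr s' by simp
    qed
    have c4': "card (L u4) \<ge> 3 + of_bool (adj u1 u4) + of_bool (adj u2 u4) + of_bool (adj u3 u4)"
      using cL N k4 by simp
    have f4: "finite (L u1)" "finite (L u2)" "finite (L u3)" "finite (L u4)" using finL N by auto
    obtain x1 x2 x3 x4 where X: "x1 \<in> L u1" "x2 \<in> L u2" "x3 \<in> L u3" "x4 \<in> L u4"
        "notri4 x1 x2 x3 x4" "glob4 x1 x2 x3 x4 (s u1) (s u2) (s u3) (s u4)"
        "adj u1 u2 \<longrightarrow> s u1 + x1 \<noteq> s u2 + x2" "adj u1 u3 \<longrightarrow> s u1 + x1 \<noteq> s u3 + x3"
        "adj u1 u4 \<longrightarrow> s u1 + x1 \<noteq> s u4 + x4"
        "adj u2 u3 \<longrightarrow> s u2 + x2 \<noteq> s u3 + x3" "adj u2 u4 \<longrightarrow> s u2 + x2 \<noteq> s u4 + x4"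
        "adj u3 u4 \<longrightarrow> s u3 + x3 \<noteq> s u4 + x4"
      using LL4[OF f4 c1 c2 c3 c4', of "s u1" "s u2" "s u3" "s u4"] by blast
    define f where "f = (\<lambda>u. if u = u1 then x1 else if u = u2 then x2 else if u = u3 then x3 else x4)"
    have fx: "f u1 = x1" "f u2 = x2" "f u3 = x3" "f u4 = x4" using d by (simp_all add: f_def)
    have qm: "2 * card {u\<in>N. f u = j} \<le> card N + 1" for j
    proof -
      have "card {u\<in>N. f u = j} = length (filter (\<lambda>u. f u = j) [u1,u2,u3,u4])"
        unfolding NL(1) by (rule card_filter_distinct[OF NL(2)])
      also have "\<dots> = of_bool (f u1 = j) + of_bool (f u2 = j) + of_bool (f u3 = j) + of_bool (f u4 = j)" by (rule lf4)
      also have "\<dots> = of_bool (x1 = j) + of_bool (x2 = j) + of_bool (x3 = j) + of_bool (x4 = j)" using d by (simp add: f_def)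
      finally have cc: "card {u\<in>N. f u = j} = of_bool (x1 = j) + of_bool (x2 = j) + of_bool (x3 = j) + of_bool (x4 = j)" .
      show ?thesis using X(5) cc \<open>card N = 4\<close> unfolding notri4_def by (cases "x1 = j"; cases "x2 = j"; cases "x3 = j"; cases "x4 = j") simp_all
    qed
    have FL: "(\<forall>u\<in>N. f u \<in> L u)" using X N d by (auto simp: fx)
    define P where "P u w \<longleftrightarrow> (adj u w \<longrightarrow> s u + f u \<noteq> s w + f w)" for u w
    have Psym: "P u w \<Longrightarrow> P w u" for u w unfolding P_def using sym[of u w] by auto
    have Pd: "P u u" for u unfolding P_def using irr by auto
    have P0: "P u1 u2" "P u1 u3" "P u1 u4" "P u2 u3" "P u2 u4" "P u3 u4"
      unfolding P_def using X fx by auto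
    have Pall: "P u1 u1" "P u1 u2" "P u1 u3" "P u1 u4" "P u2 u1" "P u2 u2" "P u2 u3" "P u2 u4" "P u3 u1" "P u3 u2" "P u3 u3" "P u3 u4" "P u4 u1" "P u4 u2" "P u4 u3" "P u4 u4" using P0 Psym Pd by blast+
    have Pq: "\<forall>u\<in>N. \<forall>w\<in>N. P u w" unfolding N using Pall by blast
    have BF: "(\<forall>u\<in>N. \<forall>w\<in>N. adj u w \<longrightarrow> s u + f u \<noteq> s w + f w)"
      using Pq unfolding P_def .
    have SM: "(\<forall>u\<in>N. sum f N \<noteq> s u + f u)"
      using X(6) N d unfolding glob4_def by (auto simp: fx algebra_simps)
    show ?thesis using qm FL BF SM by blast
  qed
qed

lemma qm_iff: "(real k \<le> of_int \<lceil>real d / 2\<rceil>) \<longleftrightarrow> 2*k \<le> d+1"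
proof -
  have "real k \<le> of_int \<lceil>real d / 2\<rceil> \<longleftrightarrow> int k \<le> \<lceil>real d / 2\<rceil>"
    by (metis of_int_le_iff of_int_of_nat_eq)
  also have "\<dots> \<longleftrightarrow> real_of_int (int k) - 1 < real d / 2" by (rule le_ceiling_iff)
  also have "\<dots> \<longleftrightarrow> 2 * real k < real d + 2" by auto
  also have "\<dots> \<longleftrightarrow> 2*k \<le> d+1" by linarith
  finally show ?thesis .
qed

lemma sg_edge:
  assumes "simple_graph V E" "{u,w} \<in> E"
  shows "u \<noteq> w \<and> u \<in> V \<and> w \<in> V"
proof -
  obtain a b where "a \<noteq> b" "a \<in> V" "b \<in> V" "{u,w} = {a,b}"
    using assms unfolding simple_graph_def by blast
  then show ?thesis by (auto simp: doubleton_eq_iff)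
qed

lemma sg_form:
  assumes "simple_graph V E" "e \<in> E"
  shows "\<exists>a b. a \<noteq> b \<and> a \<in> V \<and> b \<in> V \<and> e = {a,b}"
  using assms unfolding simple_graph_def by blast

lemma sg_finite_nbhd: "simple_graph V E \<Longrightarrow> finite (nbhd V E u)"
  unfolding simple_graph_def nbhd_def by auto

definition wnsd :: "'a set \<Rightarrow> 'a set set \<Rightarrow> ('a set \<Rightarrow> nat) \<Rightarrow> bool" where
  "wnsd V E c \<longleftrightarrow> (\<forall>u\<in>V. \<forall>w\<in>V. {u,w} \<in> E \<longrightarrow> \<not>(degree V E u = 1 \<and> degree V E w = 1) \<longrightarrow>
      sigma V E c u \<noteq> sigma V E c w)"

definition qm2 :: "'a set \<Rightarrow> 'a set set \<Rightarrow> ('a set \<Rightarrow> nat) \<Rightarrow> bool" where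
  "qm2 V E c \<longleftrightarrow> (\<forall>x\<in>V. \<forall>i. 2 * card {u \<in> nbhd V E x. c {x,u} = i} \<le> degree V E x + 1)"

definition good7 :: "'a set \<Rightarrow> 'a set set \<Rightarrow> ('a set \<Rightarrow> nat) \<Rightarrow> bool" where
  "good7 V E c \<longleftrightarrow> edge_coloring E 7 c \<and> qm2 V E c \<and> wnsd V E c"

lemma extend:
  assumes sg: "simple_graph V E" and md: "max_degree_le V E 4" and v: "v \<in> V"
    and IH: "good7 (V - {v}) {e\<in>E. v \<notin> e} c'"
  shows "\<exists>c. good7 V E c"
proof -
  define V' where "V' = V - {v}"
  define E' where "E' = {e\<in>E. v \<notin> e}"
  define N where "N = nbhd V E v"
  define nb' where "nb' u = nbhd V' E' u" for u
  define s where "s u = int (sigma V' E' c' u)" for u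
  define D where "D u = degree V E u" for u
  have ec': "edge_coloring E' 7 c'" and qm': "qm2 V' E' c'" and ns': "wnsd V' E' c'"
    using IH unfolding good7_def V'_def E'_def by auto
  have finV: "finite V" using sg by (simp add: simple_graph_def)
  have edge: "{a,b} \<in> E \<Longrightarrow> a \<noteq> b \<and> a \<in> V \<and> b \<in> V" for a b using sg_edge[OF sg] by blast
  have nb'_eq: "nb' u = nbhd V E u - {v}" if "u \<noteq> v" for u
    using that unfolding nb'_def nbhd_def V'_def E'_def by auto
  have vnb: "v \<notin> nb' u" for u unfolding nb'_def nbhd_def V'_def by auto
  have nb'V: "nb' u \<subseteq> V'" for u unfolding nb'_def nbhd_def by auto
  have NV: "N \<subseteq> V'" using edge unfolding N_def nbhd_def V'_def by auto
  have finN: "finite N" using NV finV unfolding V'_def by (meson finite_Diff finite_subset)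
  have finnb: "finite (nb' u)" for u using nb'V finV unfolding V'_def by (meson finite_Diff finite_subset)
  have N_iff: "u \<in> N \<longleftrightarrow> v \<in> nbhd V E u" if "u \<in> V" for u
    using that v unfolding N_def nbhd_def by (auto simp: insert_commute)
  have nbhd_split: "nbhd V E u = nb' u \<union> (if u \<in> N then {v} else {})" if "u \<in> V" "u \<noteq> v" for u
    using nb'_eq[OF that(2)] N_iff[OF that(1)] by auto
  have D_nb: "D u = card (nb' u) + (if u \<in> N then 1 else 0)" if "u \<in> V" "u \<noteq> v" for u
    unfolding D_def degree_def using nbhd_split[OF that] finnb vnb by auto
  have deg': "degree V' E' u = card (nb' u)" for u unfolding degree_def nb'_def ..
  have D4: "D u \<le> 4" if "u \<in> V" for u using md that unfolding max_degree_le_def D_def by auto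
  define adj where "adj u w \<longleftrightarrow> {u,w} \<in> E" for u w
  define cnt where "cnt u i = card {w \<in> nb' u. c' {u,w} = i}" for u i
  define L where "L u = {x::int. 1 \<le> x \<and> x \<le> 7 \<and> (\<forall>w \<in> nb' u - N. s u + x \<noteq> int (sigma V' E' c' w))
      \<and> 2 * (cnt u (nat x) + 1) \<le> D u + 1}" for u
  have L17: "L u \<subseteq> {1..7}" for u unfolding L_def by auto
  have finL: "finite (L u)" for u using L17 finite_subset by blast
  have nbN: "nb' u \<inter> N = {w\<in>N. adj u w}" if "u \<in> N" for u
  proof -
    have "u \<noteq> v" using that NV unfolding V'_def by auto
    then show ?thesis using NV unfolding nb'_def nbhd_def adj_def E'_def V'_def by auto
  qed
  have cardL: "card (L u) \<ge> 3 + card {w\<in>N. adj u w}" if uN: "u \<in> N" for u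
  proof -
    have uV: "u \<in> V" "u \<noteq> v" using uN NV unfolding V'_def by auto
    have Du: "D u = card (nb' u) + 1" using D_nb[OF uV] uN by simp
    let ?B1 = "(\<lambda>w. int (sigma V' E' c' w) - s u) ` (nb' u - N)"
    let ?B2 = "{x \<in> {1..7::int}. \<not> (2 * (cnt u (nat x) + 1) \<le> D u + 1)}"
    have sub: "{1..7::int} - ?B1 - ?B2 \<subseteq> L u" unfolding L_def by force
    have cB1: "card ?B1 \<le> card (nb' u - N)" by (rule card_image_le) (use finnb in auto)
    have cdiff: "card (nb' u - N) = card (nb' u) - card {w\<in>N. adj u w}"
      using card_Diff_subset_Int[of "nb' u" N] finnb nbN[OF uN] finN by auto
    have cle: "card {w\<in>N. adj u w} \<le> card (nb' u)"
      using card_mono[OF finnb, of "nb' u \<inter> N"] nbN[OF uN] by auto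
    have cB2: "card ?B2 \<le> 1"
    proof -
      have fB2: "finite ?B2" by (rule finite_subset[of _ "{1..7::int}"]) auto
      have "\<forall>a\<in>?B2. \<forall>b\<in>?B2. a = b"
      proof (intro ballI, rule ccontr)
        fix a b assume a: "a \<in> ?B2" and b: "b \<in> ?B2" and ab: "a \<noteq> b"
        have nab: "nat a \<noteq> nat b" using a b ab by auto
        let ?Sa = "{w \<in> nb' u. c' {u,w} = nat a}" and ?Sb = "{w \<in> nb' u. c' {u,w} = nat b}"
        have "card (?Sa \<union> ?Sb) = card ?Sa + card ?Sb"
          by (rule card_Un_disjoint) (use finnb nab in auto)
        moreover have "card (?Sa \<union> ?Sb) \<le> card (nb' u)" by (rule card_mono[OF finnb]) auto
        moreover have "2 * card ?Sa \<ge> D u" "2 * card ?Sb \<ge> D u" using a b unfolding cnt_def by auto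
        ultimately show False using Du by linarith
      qed
      then show ?thesis using card_le_Suc0_iff_eq[OF fB2] by auto
    qed
    have c7: "card {1..7::int} = 7" by simp
    have "card {1..7::int} - card ?B1 \<le> card ({1..7::int} - ?B1)" by (rule diff_card_le_card_Diff) (use finnb in auto)
    moreover have "card ({1..7::int} - ?B1) - card ?B2 \<le> card ({1..7::int} - ?B1 - ?B2)"
      by (rule diff_card_le_card_Diff) (rule finite_subset[of _ "{1..7::int}"], auto)
    moreover have "card ({1..7::int} - ?B1 - ?B2) \<le> card (L u)" by (rule card_mono[OF finL sub])
    moreover have "card (nb' u) \<le> 3" using D4[OF uV(1)] Du by linarith
    ultimately show ?thesis using c7 cB1 cdiff cle cB2 by linarith
  qed
  have cN4: "card N \<le> 4" using md v unfolding max_degree_le_def degree_def N_def by auto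
  have adj_sym: "adj u w = adj w u" for u w unfolding adj_def by (simp add: insert_commute)
  have adj_irr: "\<not> adj u u" for u using edge[of u u] unfolding adj_def by auto
  obtain f where fL: "\<forall>u\<in>N. f u \<in> L u"
    and fadj: "\<forall>u\<in>N. \<forall>w\<in>N. adj u w \<longrightarrow> s u + f u \<noteq> s w + f w"
    and fglob: "2 \<le> card N \<longrightarrow> (\<forall>u\<in>N. sum f N \<noteq> s u + f u)"
    and fqm: "\<forall>j. 2 * card {u\<in>N. f u = j} \<le> card N + 1"
    using LLN[OF finN cN4, where L=L and s=s and adj=adj] finL cardL adj_sym adj_irr by blast
  have f1: "1 \<le> f u" "f u \<le> 7" if "u \<in> N" for u using fL that L17 by force+
  define g where "g u = nat (f u)" for u
  have gf: "int (g u) = f u" if "u \<in> N" for u using f1[OF that] unfolding g_def by simp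
  define c where "c e = (if v \<in> e then g (the_elem (e - {v})) else c' e)" for e
  have c_v1: "c {v,u} = g u" if "u \<noteq> v" for u
  proof -
    have "{v,u} - {v} = {u}" using that by auto
    then show ?thesis unfolding c_def by simp
  qed
  have c_v2: "c {u,v} = g u" if "u \<noteq> v" for u using c_v1[OF that] by (simp add: insert_commute)
  have c_nv: "c e = c' e" if "v \<notin> e" for e using that unfolding c_def by simp
  have c_nb: "c {u,w} = c' {u,w}" if "u \<noteq> v" "w \<in> nb' u" for u w
  proof -
    have "w \<noteq> v" using vnb that(2) by metis
    then show ?thesis using c_nv[of "{u,w}"] that(1) by auto
  qed
  have sig_u: "sigma V E c u = sigma V' E' c' u + (if u \<in> N then g u else 0)" if "u \<in> V" "u \<noteq> v" for u
  proof -
    have "sigma V E c u = (\<Sum>w\<in>nb' u \<union> (if u \<in> N then {v} else {}). c {u,w})"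
      unfolding sigma_def using nbhd_split[OF that] by simp
    also have "\<dots> = (\<Sum>w\<in>nb' u. c {u,w}) + (if u \<in> N then c {u,v} else 0)"
      using finnb vnb by (simp add: sum.union_disjoint)
    also have "(\<Sum>w\<in>nb' u. c {u,w}) = (\<Sum>w\<in>nb' u. c' {u,w})"
    proof (rule sum.cong[OF refl])
      fix x assume "x \<in> nb' u"
      then have "x \<noteq> v" using vnb by metis
      then show "c {u,x} = c' {u,x}" using c_nv[of "{u,x}"] that(2) by auto
    qed
    also have "\<dots> = sigma V' E' c' u" unfolding sigma_def nb'_def ..
    finally show ?thesis using c_v2[OF that(2)] by simp
  qed
  have sig_v: "int (sigma V E c v) = sum f N"
  proof -
    have "sigma V E c v = (\<Sum>u\<in>N. g u)" unfolding sigma_def N_def[symmetric]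
    proof (rule sum.cong[OF refl])
      fix x assume "x \<in> N"
      then have "x \<noteq> v" using NV unfolding V'_def by auto
      then show "c {v,x} = g x" by (rule c_v1)
    qed
    then have "int (sigma V E c v) = (\<Sum>u\<in>N. int (g u))" by simp
    also have "\<dots> = sum f N" using gf by (intro sum.cong) auto
    finally show ?thesis .
  qed
  have sig_u_int: "int (sigma V E c u) = s u + (if u \<in> N then f u else 0)" if "u \<in> V" "u \<noteq> v" for u
    using sig_u[OF that] gf unfolding s_def by auto
  have EC: "edge_coloring E 7 c"
    unfolding edge_coloring_def
  proof
    fix e assume eE: "e \<in> E"
    then obtain a b where ab: "a \<noteq> b" "a \<in> V" "b \<in> V" "e = {a,b}" using sg_form[OF sg] by blast
    show "c e \<in> {1..7}"
    proof (cases "v \<in> e")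
      case True
      then obtain u where u: "e = {v,u}" "u \<noteq> v" using ab by (auto simp: insert_commute)
      then have "u \<in> N" using eE edge[of v u] unfolding N_def nbhd_def by auto
      then show ?thesis using u c_v1 f1[of u] unfolding g_def by auto
    next
      case False
      then have "e \<in> E'" using eE unfolding E'_def by auto
      then show ?thesis using ec' c_nv[OF False] unfolding edge_coloring_def by auto
    qed
  qed
  have QM: "qm2 V E c"
    unfolding qm2_def
  proof (intro ballI allI)
    fix x i assume xV: "x \<in> V"
    show "2 * card {u \<in> nbhd V E x. c {x,u} = i} \<le> degree V E x + 1"
    proof (cases "x = v")
      case True
      have "{u \<in> nbhd V E x. c {x,u} = i} = {u\<in>N. f u = int i}"
        using True NV f1 gf c_v1 unfolding N_def V'_def g_def by (auto; fastforce)
      then show ?thesis using fqm True unfolding N_def degree_def by metis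
    next
      case False
      have eqs: "{u \<in> nbhd V E x. c {x,u} = i} = {w\<in>nb' x. c' {x,w} = i} \<union> (if x \<in> N \<and> g x = i then {v} else {})"
        using nbhd_split[OF xV False] c_v2[OF False] vnb False c_nb[OF False]
        by (auto split: if_splits)
      have ceq: "card {u \<in> nbhd V E x. c {x,u} = i} = cnt x i + (if x \<in> N \<and> g x = i then 1 else 0)"
        unfolding eqs cnt_def using finnb vnb by (auto simp: card_Un_disjoint)
      show ?thesis
      proof (cases "x \<in> N \<and> g x = i")
        case True
        then have "f x \<in> L x" using fL by auto
        then have "2 * (cnt x (nat (f x)) + 1) \<le> D x + 1" unfolding L_def by auto
        then show ?thesis using ceq True unfolding g_def D_def by simp
      next
        case F: False
        have "x \<in> V'" using xV False unfolding V'_def by auto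
        then have "2 * cnt x i \<le> degree V' E' x + 1" using qm' unfolding qm2_def cnt_def nb'_def by auto
        moreover have "degree V' E' x \<le> degree V E x" using D_nb[OF xV False] deg' unfolding D_def by simp
        ultimately show ?thesis using ceq F by simp
      qed
    qed
  qed
  have K: "sigma V E c x \<noteq> sigma V E c y"
    if xV: "x \<in> V" and yV: "y \<in> V" and xy: "{x,y} \<in> E" and nd: "\<not>(D x = 1 \<and> D y = 1)"
      and cs: "x = v \<or> (x \<in> N \<and> y \<noteq> v) \<or> (x \<notin> N \<and> y \<notin> N \<and> x \<noteq> v \<and> y \<noteq> v)" for x y
  proof -
    from cs consider "x = v" | "x \<in> N" "y \<noteq> v" | "x \<notin> N" "y \<notin> N" "x \<noteq> v" "y \<noteq> v" by blast
    then show ?thesis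
    proof cases
      case 1
      have yN: "y \<in> N" using xy yV 1 unfolding N_def nbhd_def by auto
      have yv: "y \<noteq> v" using edge[OF xy] 1 by auto
      show ?thesis
      proof (cases "2 \<le> card N")
        case True
        then have "sum f N \<noteq> s y + f y" using fglob yN by auto
        then have "int (sigma V E c x) \<noteq> int (sigma V E c y)"
          using sig_v sig_u_int[OF yV yv] yN 1 by simp
        then show ?thesis by simp
      next
        case False
        have "card N \<noteq> 0" using yN finN by auto
        then have cN1: "card N = 1" using False by simp
        then have Nsing: "N = {y}" using yN by (metis card_1_singletonE singletonD)
        have "D x = 1" using cN1 1 unfolding D_def degree_def N_def by simp
        then have "D y \<noteq> 1" using nd by simp
        then have "nb' y \<noteq> {}" using D_nb[OF yV yv] yN by auto
        then obtain w where w: "w \<in> nb' y" by blast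
        have "{y,w} \<in> E'" using w unfolding nb'_def nbhd_def by auto
        then have "c' {y,w} \<ge> 1" using ec' unfolding edge_coloring_def by auto
        then have "sigma V' E' c' y \<ge> 1"
          unfolding sigma_def nb'_def[symmetric] using w finnb
          by (metis (no_types, lifting) dual_order.trans member_le_sum zero_le)
        then have "s y \<ge> 1" unfolding s_def by simp
        then have "int (sigma V E c x) \<noteq> int (sigma V E c y)"
          using sig_v sig_u_int[OF yV yv] yN 1 Nsing by simp
        then show ?thesis by simp
      qed
    next
      case 2
      have xv: "x \<noteq> v" using 2 NV unfolding V'_def by auto
      show ?thesis
      proof (cases "y \<in> N")
        case True
        have "adj x y" using xy unfolding adj_def .
        then have "s x + f x \<noteq> s y + f y" using fadj 2 True by auto
        then have "int (sigma V E c x) \<noteq> int (sigma V E c y)"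
          using sig_u_int[OF xV xv] sig_u_int[OF yV 2(2)] 2 True by simp
        then show ?thesis by simp
      next
        case False
        have "y \<in> nb' x" using xy yV xv 2(2) unfolding nb'_def nbhd_def V'_def E'_def by auto
        then have "s x + f x \<noteq> int (sigma V' E' c' y)" using fL 2 False unfolding L_def by auto
        then have "int (sigma V E c x) \<noteq> int (sigma V E c y)"
          using sig_u_int[OF xV xv] sig_u_int[OF yV 2(2)] 2 False unfolding s_def by simp
        then show ?thesis by simp
      qed
    next
      case 3
      have "x \<in> V'" "y \<in> V'" using 3 xV yV unfolding V'_def by auto
      moreover have "{x,y} \<in> E'" using xy 3 unfolding E'_def by auto
      moreover have "degree V' E' x = D x" using D_nb[OF xV 3(3)] deg' 3 by simp
      moreover have "degree V' E' y = D y" using D_nb[OF yV 3(4)] deg' 3 by simp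
      ultimately have "sigma V' E' c' x \<noteq> sigma V' E' c' y" using ns' nd unfolding wnsd_def by auto
      then show ?thesis using sig_u[OF xV 3(3)] sig_u[OF yV 3(4)] 3 by simp
    qed
  qed
  have NS: "wnsd V E c"
    unfolding wnsd_def
  proof (intro ballI impI)
    fix x y assume xV: "x \<in> V" and yV: "y \<in> V" and xy: "{x,y} \<in> E"
      and nd: "\<not>(degree V E x = 1 \<and> degree V E y = 1)"
    have nd': "\<not>(D x = 1 \<and> D y = 1)" "\<not>(D y = 1 \<and> D x = 1)" using nd unfolding D_def by auto
    have yx: "{y,x} \<in> E" using xy by (simp add: insert_commute)
    have yv: "x = v \<Longrightarrow> y \<noteq> v" using edge[OF xy] by auto
    show "sigma V E c x \<noteq> sigma V E c y"
    proof (cases "x = v \<or> (x \<in> N \<and> y \<noteq> v) \<or> (x \<notin> N \<and> y \<notin> N \<and> x \<noteq> v \<and> y \<noteq> v)")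
      case True
      then show ?thesis using K[OF xV yV xy nd'(1)] by blast
    next
      case False
      then have "y = v \<or> (y \<in> N \<and> x \<noteq> v) \<or> (y \<notin> N \<and> x \<notin> N \<and> y \<noteq> v \<and> x \<noteq> v)" by blast
      then show ?thesis using K[OF yV xV yx nd'(2)] by auto
    qed
  qed
  show ?thesis using EC QM NS unfolding good7_def by blast
qed

lemma GS: "simple_graph V E \<Longrightarrow> max_degree_le V E 4 \<Longrightarrow> \<exists>c. good7 V E c"
proof (induction "card V" arbitrary: V E rule: less_induct)
  case less
  show ?case
  proof (cases "V = {}")
    case True
    have "E = {}"
    proof (rule ccontr)
      assume "E \<noteq> {}"
      then obtain e where "e \<in> E" by blast
      then show False using sg_form[OF less.prems(1)] True by blast
    qed
    then show ?thesis using True unfolding good7_def edge_coloring_def qm2_def wnsd_def by auto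
  next
    case False
    then obtain v where v: "v \<in> V" by blast
    have fin: "finite V" using less.prems(1) by (simp add: simple_graph_def)
    have lt: "card (V - {v}) < card V" using card_Diff1_less[OF fin v] .
    have sg': "simple_graph (V - {v}) {e\<in>E. v \<notin> e}"
      unfolding simple_graph_def
    proof (intro conjI ballI)
      show "finite (V - {v})" using fin by simp
    next
      fix e assume "e \<in> {e\<in>E. v \<notin> e}"
      then have "e \<in> E" "v \<notin> e" by auto
      then obtain a b where "a \<noteq> b" "a \<in> V" "b \<in> V" "e = {a,b}" using sg_form[OF less.prems(1)] by blast
      then show "\<exists>u w. u \<noteq> w \<and> u \<in> V - {v} \<and> w \<in> V - {v} \<and> e = {u, w}" using \<open>v \<notin> e\<close> by auto
    qed
    have md': "max_degree_le (V - {v}) {e\<in>E. v \<notin> e} 4"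
      unfolding max_degree_le_def
    proof
      fix u assume uV: "u \<in> V - {v}"
      have "nbhd (V - {v}) {e\<in>E. v \<notin> e} u \<subseteq> nbhd V E u" unfolding nbhd_def by auto
      then have "degree (V - {v}) {e\<in>E. v \<notin> e} u \<le> degree V E u"
        unfolding degree_def by (rule card_mono[OF sg_finite_nbhd[OF less.prems(1)]])
      also have "\<dots> \<le> 4" using less.prems(2) uV unfolding max_degree_le_def by auto
      finally show "degree (V - {v}) {e\<in>E. v \<notin> e} u \<le> 4" .
    qed
    obtain c' where "good7 (V - {v}) {e\<in>E. v \<notin> e} c'" using less.hyps[OF lt sg' md'] by blast
    then show ?thesis using extend[OF less.prems v] by blast
  qed
qed

theorem mainTheorem3:
  fixes V :: "'a set" and E :: "'a set set"
  assumes "simple_graph V E" and "nice V E" and "max_degree_le V E 4"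
  shows "(\<exists>k. qm_nsd_colorable V E k) \<and> chi_qm_sigma V E \<le> 7"
proof -
  obtain c where g: "good7 V E c" using GS assms(1,3) by blast
  have "edge_coloring E 7 c" using g unfolding good7_def by auto
  moreover have "quasi_majority V E c"
    using g unfolding good7_def qm2_def quasi_majority_def by (simp add: qm_iff)
  moreover have "nsd V E c"
    using g assms(2) unfolding good7_def wnsd_def nsd_def nice_def by blast
  ultimately have col: "qm_nsd_colorable V E 7" unfolding qm_nsd_colorable_def by blast
  then show ?thesis unfolding chi_qm_sigma_def by (auto intro: Least_le)
qed

end
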